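(* Let $Z$ be a continuous random variable with density $f$, CDF $F$, finite expectation, and support unbounded on the right. Suppose that for some $\alpha\in[0,1)$ and $C>0$ the generalized hazard rate satisfies $h_\alpha(z) \le C$ for all $z\in\mathbb{R}$, and that $$\mathbb{E}\big[\max_{i=1,\dots,N} Z_i\big] - \mathbb{E}[Z_1] \le Q(N)$$ for some $Q(N)>0$, where $Z_1,\dots,Z_N$ are i.i.d. copies of $Z$. Run GBPA with the stochastically smoothed potential whose perturbation is $\eta Z$ with $$\eta = \left(\frac{2CNT}{(1-\alpha)Q(N)}\right)^{1/(2-\alpha)}.$$ Then for every gain sequence $g_1,\dots,g_T\in[-1,0]^N$ the expected regret is at most $$2\left(\frac{2C}{1-\alpha}\right)^{1/(2-\alpha)} (NT)^{1/(2-\alpha)}\, Q(N)^{(1-\alpha)/(2-\alpha)}.$$ In particular, the expected regret is sublinear in $T$.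
   Context: Generalized hazard rate: for $\alpha\in[0,1)$, $h_\alpha(z) = \frac{f(z)|z|^\alpha}{(1-F(z))^{1-\alpha}}$ (for $\alpha=0$ this is the usual hazard rate). Adversarial multi-armed bandit: $N$ arms, $T$ rounds; an oblivious adversary fixes gain vectors $g_1,\dots,g_T \in [-1,0]^N$ in advance. For a random variable $W$ with a continuous distribution and finite expectation, the stochastically smoothed potential is $\tilde\Phi(G) = \mathbb{E}[\max_{i}(G_i + W_i)]$ for $G\in\mathbb{R}^N$, with $W_1,\dots,W_N$ i.i.d. copies of $W$; $\nabla_i\tilde\Phi(G) = \mathbb{P}(i = \arg\max_j (G_j+W_j))$. "Perturbation $\eta Z$" means $W=\eta Z$. GBPA$(\tilde\Phi)$: set $\hat G_0 = 0$; for $t=1,\dots,T$: $p_t = \nabla\tilde\Phi(\hat G_{t-1})$, draw $i_t \sim p_t$, observe only $g_{t,i_t}$, set $\hat g_t = \frac{g_{t,i_t}}{p_{t,i_t}} e_{i_t}$, $\hat G_t = \hat G_{t-1} + \hat g_t$. Expected regret: $\mathbb{E}\big[\max_{i}\sum_{t=1}^T (g_{t,i} - g_{t,i_t})\big]$ over the learner's randomness. *)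

theory Defs
  imports "HOL-Probability.Probability"
begin

definition pert_dist :: "(real \<Rightarrow> real) \<Rightarrow> real measure" where
  "pert_dist f = density lborel (\<lambda>z. ennreal (f z))"

text \<open>Generalized hazard rate h_alpha(z) = f(z) |z|^alpha / (1 - F(z))^(1-alpha),
  with the convention |z|^0 = 1 (also at z = 0).\<close>
definition gen_hazard :: "(real \<Rightarrow> real) \<Rightarrow> real \<Rightarrow> real \<Rightarrow> real" where
  "gen_hazard f \<alpha> z =
     f z * (if \<alpha> = 0 then 1 else \<bar>z\<bar> powr \<alpha>) / (1 - cdf (pert_dist f) z) powr (1 - \<alpha>)"

definition exp_max :: "(real \<Rightarrow> real) \<Rightarrow> nat \<Rightarrow> real" where
  "exp_max f N = (\<integral>w. Max (w ` {..<N}) \<partial>(PiM {..<N} (\<lambda>_. pert_dist f)))"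

text \<open>Gradient of the stochastically smoothed potential with perturbation eta*Z:
  probability that arm i is the argmax of G_j + eta*Z_j (ties have probability 0).\<close>
definition smooth_grad :: "(real \<Rightarrow> real) \<Rightarrow> nat \<Rightarrow> real \<Rightarrow> (nat \<Rightarrow> real) \<Rightarrow> nat \<Rightarrow> real" where
  "smooth_grad f N \<eta> G i =
     measure (PiM {..<N} (\<lambda>_. pert_dist f))
       {w \<in> space (PiM {..<N} (\<lambda>_. pert_dist f)). \<forall>j<N. j \<noteq> i \<longrightarrow> G j + \<eta> * w j < G i + \<eta> * w i}"

primrec gbpa_G :: "(real \<Rightarrow> real) \<Rightarrow> nat \<Rightarrow> real \<Rightarrow> (nat \<Rightarrow> nat \<Rightarrow> real) \<Rightarrow> (nat \<Rightarrow> nat) \<Rightarrow> nat \<Rightarrow> (nat \<Rightarrow> real)" where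
  "gbpa_G f N \<eta> g a 0 = (\<lambda>_. 0)"
| "gbpa_G f N \<eta> g a (Suc t) =
     (let G = gbpa_G f N \<eta> g a t; i = a (Suc t)
      in G(i := G i + g (Suc t) i / smooth_grad f N \<eta> G i))"

definition gbpa_path_prob :: "(real \<Rightarrow> real) \<Rightarrow> nat \<Rightarrow> real \<Rightarrow> (nat \<Rightarrow> nat \<Rightarrow> real) \<Rightarrow> nat \<Rightarrow> (nat \<Rightarrow> nat) \<Rightarrow> real" where
  "gbpa_path_prob f N \<eta> g T a = (\<Prod>t\<in>{1..T}. smooth_grad f N \<eta> (gbpa_G f N \<eta> g a (t - 1)) (a t))"

text \<open>Expected regret of GBPA over the learner's randomness (finite sum over arm sequences).\<close>
definition gbpa_regret :: "(real \<Rightarrow> real) \<Rightarrow> nat \<Rightarrow> real \<Rightarrow> (nat \<Rightarrow> nat \<Rightarrow> real) \<Rightarrow> nat \<Rightarrow> real" where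
  "gbpa_regret f N \<eta> g T =
     (\<Sum>a\<in>PiE {1..T} (\<lambda>_. {..<N}).
        gbpa_path_prob f N \<eta> g T a *
        (Max ((\<lambda>i. \<Sum>t\<in>{1..T}. g t i) ` {..<N}) - (\<Sum>t\<in>{1..T}. g t (a t))))"

definition gain_seq :: "nat \<Rightarrow> nat \<Rightarrow> (nat \<Rightarrow> nat \<Rightarrow> real) \<Rightarrow> bool" where
  "gain_seq N T g \<longleftrightarrow> (\<forall>t\<in>{1..T}. \<forall>i<N. -1 \<le> g t i \<and> g t i \<le> 0)"

definition eta_choice :: "real \<Rightarrow> real \<Rightarrow> real \<Rightarrow> nat \<Rightarrow> nat \<Rightarrow> real" where
  "eta_choice C \<alpha> Q N T = (2 * C * real N * real T / ((1 - \<alpha>) * Q)) powr (1 / (2 - \<alpha>))"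

definition regret_bound :: "real \<Rightarrow> real \<Rightarrow> real \<Rightarrow> nat \<Rightarrow> nat \<Rightarrow> real" where
  "regret_bound C \<alpha> Q N T =
     2 * (2 * C / (1 - \<alpha>)) powr (1 / (2 - \<alpha>)) * (real N * real T) powr (1 / (2 - \<alpha>))
       * Q powr ((1 - \<alpha>) / (2 - \<alpha>))"

end

theory Submission
  imports Defs
begin

lemma powr_subadd:
  fixes x y b :: real
  assumes "0 \<le> x" "0 \<le> y" "0 < b" "b \<le> 1"
  shows "(x + y) powr b \<le> x powr b + y powr b"
proof (cases "x + y = 0")
  case True then show ?thesis using assms by simp
next
  case False
  define s where "s = x + y"
  have s: "s > 0" using False assms unfolding s_def by simp
  have 1: "x / s \<le> (x / s) powr b"
    using powr_mono'[of b 1 "x/s"] assms s by (simp add: s_def)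
  have "y \<le> s" unfolding s_def using assms by simp
  then have "0 \<le> y / s" "y / s \<le> 1" using assms s by auto
  then have 2: "y / s \<le> (y / s) powr b"
    using powr_mono'[of b 1 "y/s"] assms s by simp
  have "x / s + y / s = s / s" by (simp add: add_divide_distrib[symmetric] s_def)
  then have "1 = x / s + y / s" using s by simp
  also have "\<dots> \<le> (x powr b + y powr b) / s powr b"
    using 1 2 by (simp add: powr_divide add_divide_distrib)
  finally have "s powr b \<le> x powr b + y powr b"
    using s by (simp add: divide_simps split: if_splits)
  then show ?thesis by (simp add: s_def)
qed

definition Hf :: "real \<Rightarrow> real \<Rightarrow> real" where
  "Hf b z = ((max z 0) powr b - (max (-z) 0) powr b) / b"

lemma Hf_bound:
  fixes a c b :: real
  assumes "a \<le> c" "0 < b" "b \<le> 1"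
  shows "Hf b c - Hf b a \<le> 2 * (c - a) powr b / b"
proof -
  consider "0 \<le> a" | "c \<le> 0" | "a < 0" "0 < c" by linarith
  then show ?thesis
  proof cases
    case 1
    have i: "c powr b \<le> a powr b + (c - a) powr b"
      using powr_subadd[of a "c - a" b] assms 1 by simp
    have "max c 0 = c" "max a 0 = a" "max (-c) 0 = 0" "max (-a) 0 = 0"
      using 1 assms by auto
    then have "Hf b c - Hf b a = (c powr b - a powr b) / b"
      by (simp add: Hf_def diff_divide_distrib)
    moreover have "c powr b - a powr b \<le> 2 * (c - a) powr b"
      using i powr_ge_zero[of "c - a" b] by linarith
    ultimately show ?thesis using assms by (simp add: divide_right_mono)
  next
    case 2
    have i: "(-a) powr b \<le> (-c) powr b + (c - a) powr b"
      using powr_subadd[of "-c" "c - a" b] assms 2 by simp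
    have "max c 0 = 0" "max a 0 = 0" "max (-c) 0 = -c" "max (-a) 0 = -a"
      using 2 assms by auto
    then have "Hf b c - Hf b a = ((-a) powr b - (-c) powr b) / b"
      by (simp add: Hf_def diff_divide_distrib)
    moreover have "(-a) powr b - (-c) powr b \<le> 2 * (c - a) powr b"
      using i powr_ge_zero[of "c - a" b] by linarith
    ultimately show ?thesis using assms by (simp add: divide_right_mono)
  next
    case 3
    have "c powr b \<le> (c - a) powr b" using 3 assms by (intro powr_mono2) auto
    moreover have "(-a) powr b \<le> (c - a) powr b" using 3 assms by (intro powr_mono2) auto
    ultimately show ?thesis using 3 assms
      by (simp add: Hf_def max_def divide_simps)
  qed
qed

lemma Hf_deriv:
  fixes b z :: real
  assumes "0 < b" "z \<noteq> 0"
  shows "(Hf b has_real_derivative \<bar>z\<bar> powr (b - 1)) (at z)"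
proof (cases "z > 0")
  case True
  have d: "((\<lambda>z. z powr b / b) has_real_derivative (b * z powr (b - 1)) / b) (at z)"
    by (intro DERIV_cdivide has_real_derivative_powr True)
  show ?thesis
    apply (rule has_field_derivative_transform_within_open[OF _ _ _, of "\<lambda>z. z powr b / b" _ _ "{0<..}"])
    using d True assms by (auto simp: Hf_def)
next
  case False
  then have z: "z < 0" using assms by simp
  have d0: "((\<lambda>z. (-z) powr b) has_real_derivative (b * (-z) powr (b - 1)) * (-1)) (at z)"
    by (rule DERIV_chain2[where g="\<lambda>z. -z", OF has_real_derivative_powr]) (use z in \<open>auto intro!: derivative_eq_intros\<close>)
  have d: "((\<lambda>z. - ((-z) powr b) / b) has_real_derivative - ((b * (-z) powr (b - 1)) * (-1)) / b) (at z)"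
    by (intro DERIV_cdivide DERIV_minus d0)
  show ?thesis
    apply (rule has_field_derivative_transform_within_open[OF _ _ _, of "\<lambda>z. - ((-z) powr b) / b" _ _ "{..<0}"])
    using d z assms by (auto simp: Hf_def)
qed

lemma Hf_cont: "0 < b \<Longrightarrow> continuous_on S (Hf b)"
  unfolding Hf_def
  by (intro continuous_intros continuous_on_powr') auto

lemma Hf_integral:
  fixes a c b :: real
  assumes "a \<le> c" "0 < b"
  shows "((\<lambda>z. \<bar>z\<bar> powr (b - 1)) has_integral (Hf b c - Hf b a)) {a..c}"
  apply (rule fundamental_theorem_of_calculus_interior_strong[where S="{0}"])
  using assms Hf_deriv[of b] Hf_cont[of b]
  by (auto simp: has_real_derivative_iff_has_vector_derivative[symmetric])


locale pert =
  fixes f :: "real \<Rightarrow> real" and \<alpha> C :: real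
  assumes f_meas: "f \<in> borel_measurable borel"
    and f_nonneg: "\<forall>z. 0 \<le> f z"
    and f_int: "integrable lborel f"
    and f_one: "(\<integral>z. f z \<partial>lborel) = 1"
    and unb: "\<forall>x. cdf (pert_dist f) x < 1"
    and alpha0: "0 \<le> \<alpha>" and alpha1: "\<alpha> < 1"
    and C_pos: "C > 0"
    and hazard: "\<forall>z. gen_hazard f \<alpha> z \<le> C"
begin

abbreviation "M \<equiv> pert_dist f"
abbreviation "F \<equiv> cdf (pert_dist f)"

lemma space_M[simp]: "space M = UNIV"
  by (simp add: pert_dist_def)

lemma sets_M[simp, measurable_cong]: "sets M = sets borel"
  by (simp add: pert_dist_def)

lemma real_dist: "real_distribution M"
proof -
  have "emeasure M UNIV = (\<integral>\<^sup>+ x. ennreal (f x) \<partial>lborel)"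
    unfolding pert_dist_def using f_meas by (simp add: emeasure_density)
  also have "\<dots> = ennreal (\<integral>z. f z \<partial>lborel)"
    using f_int f_nonneg by (intro nn_integral_eq_integral) auto
  finally have "emeasure M UNIV = 1" using f_one by simp
  then have "prob_space M" by (intro prob_spaceI) simp
  then show ?thesis unfolding real_distribution_def real_distribution_axioms_def by simp
qed

interpretation RD: real_distribution M by (rule real_dist)

lemma prob_M: "prob_space M" by (rule RD.prob_space_axioms)

lemma pw:
  assumes "z \<noteq> 0"
  shows "f z \<le> C * (1 - F z) powr (1 - \<alpha>) * \<bar>z\<bar> powr (- \<alpha>)"
proof -
  have Fz: "0 < 1 - F z" using unb by simp
  have h: "f z * (if \<alpha> = 0 then 1 else \<bar>z\<bar> powr \<alpha>) / (1 - F z) powr (1 - \<alpha>) \<le> C"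
    using hazard unfolding gen_hazard_def by simp
  have p: "0 < (1 - F z) powr (1 - \<alpha>)" using Fz by simp
  have za: "0 < \<bar>z\<bar> powr \<alpha>" using assms by simp
  show ?thesis
  proof (cases "\<alpha> = 0")
    case True
    then show ?thesis using h p assms by (simp add: divide_simps)
  next
    case False
    then have "f z * \<bar>z\<bar> powr \<alpha> \<le> C * (1 - F z) powr (1 - \<alpha>)"
      using h p by (simp add: divide_simps)
    then show ?thesis using za by (simp add: powr_minus_divide divide_simps)
  qed
qed

lemma L1:
  assumes "0 \<le> l"
  shows "F (y + l) - F y \<le> 2 * C / (1 - \<alpha>) * (1 - F y) powr (1 - \<alpha>) * l powr (1 - \<alpha>)"
proof (cases "l = 0")
  case True then show ?thesis by simp
next
  case False
  then have l: "0 < l" using assms by simp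
  define c0 where "c0 = C * (1 - F y) powr (1 - \<alpha>)"
  have c0: "0 \<le> c0" unfolding c0_def using C_pos by simp
  define b where "b = 1 - \<alpha>"
  have b: "0 < b" "b \<le> 1" unfolding b_def using alpha0 alpha1 by auto
  have mab: "- \<alpha> = b - 1" unfolding b_def by simp
  have hi: "((\<lambda>x. c0 * \<bar>x\<bar> powr (b - 1)) has_integral c0 * (Hf b (y + l) - Hf b y)) {y..y+l}"
    using Hf_integral[of y "y + l" b] b l by (intro has_integral_mult_right) auto
  have r0: "0 \<le> c0 * (Hf b (y + l) - Hf b y)"
    using has_integral_nonneg[OF hi] c0 by simp
  have "emeasure M {y<..y+l} = (\<integral>\<^sup>+ x. ennreal (f x) * indicator {y<..y+l} x \<partial>lborel)"
    unfolding pert_dist_def using f_meas by (simp add: emeasure_density)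
  also have "\<dots> \<le> (\<integral>\<^sup>+ x. ennreal (indicator {y..y+l} x * (c0 * \<bar>x\<bar> powr (b - 1))) \<partial>lborel)"
  proof (rule nn_integral_mono_AE)
    show "AE x in lborel. ennreal (f x) * indicator {y<..y + l} x
           \<le> ennreal (indicator {y..y + l} x * (c0 * \<bar>x\<bar> powr (b - 1)))"
      using AE_lborel_singleton[of 0]
    proof eventually_elim
      case (elim x)
      show ?case
      proof (cases "x \<in> {y<..y+l}")
        case True
        have "f x \<le> C * (1 - F x) powr (1 - \<alpha>) * \<bar>x\<bar> powr (- \<alpha>)"
          using pw elim by simp
        also have "\<dots> \<le> c0 * \<bar>x\<bar> powr (b - 1)"
        proof -
          have "F y \<le> F x" using True RD.cdf_nondecreasing[of y x] by simp
          moreover have "F x \<le> 1" by (rule RD.cdf_bounded_prob)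
          ultimately have "(1 - F x) powr (1 - \<alpha>) \<le> (1 - F y) powr (1 - \<alpha>)"
            using alpha1 by (intro powr_mono2) auto
          then have "C * (1 - F x) powr (1 - \<alpha>) \<le> C * (1 - F y) powr (1 - \<alpha>)"
            using C_pos by simp
          then show ?thesis unfolding c0_def mab
            by (intro mult_right_mono) auto
        qed
        finally show ?thesis using True by (simp add: ennreal_leI)
      qed simp
    qed
  qed
  also have "\<dots> = ennreal (c0 * (Hf b (y + l) - Hf b y))"
    using nn_integral_has_integral_lebesgue[OF _ hi] c0 by simp
  finally have em: "emeasure M {y<..y+l} \<le> ennreal (c0 * (Hf b (y + l) - Hf b y))" .
  have "F (y + l) - F y = measure M {y<..y+l}"
    using RD.cdf_diff_eq[of y "y + l"] l by simp
  also have "\<dots> \<le> c0 * (Hf b (y + l) - Hf b y)"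
    using em r0 by (simp add: RD.emeasure_eq_measure)
  also have "\<dots> \<le> c0 * (2 * l powr b / b)"
    using Hf_bound[of y "y + l" b] b l c0 by (intro mult_left_mono) auto
  also have "\<dots> = 2 * C / (1 - \<alpha>) * (1 - F y) powr (1 - \<alpha>) * l powr (1 - \<alpha>)"
    unfolding c0_def b_def by (simp add: ac_simps times_divide_eq_left times_divide_eq_right)
  finally show ?thesis .
qed

end

context pert begin

interpretation RD: real_distribution M by (rule real_dist)

lemma F_meas[measurable]: "F \<in> borel_measurable borel"
  by (rule borel_measurable_mono) (simp add: mono_def RD.cdf_nondecreasing)

interpretation PS: product_sigma_finite "\<lambda>_::nat. M"
  by unfold_locales

abbreviation PM :: "nat set \<Rightarrow> (nat \<Rightarrow> real) measure" where
  "PM I \<equiv> PiM I (\<lambda>_. M)"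

lemma prob_PM: "prob_space (PM I)"
  by (intro prob_space_PiM prob_M)

lemma split_measure:
  assumes i: "i \<notin> J" and J: "finite J"
    and S: "S \<in> sets (PM (insert i J))"
    and h[measurable]: "h \<in> borel_measurable (PM J)"
    and hS: "\<And>w. w \<in> space (PM J) \<Longrightarrow> measure M {x. w(i:=x) \<in> S} = h w"
    and h01: "\<And>w. 0 \<le> h w" "\<And>w. h w \<le> 1"
  shows "measure (PM (insert i J)) S = (\<integral>w. h w \<partial>PM J)"
proof -
  interpret PJ: prob_space "PM J" by (rule prob_PM)
  interpret PI: prob_space "PM (insert i J)" by (rule prob_PM)
  have "emeasure (PM (insert i J)) S = (\<integral>\<^sup>+ w. indicator S w \<partial>PM (insert i J))"
    using S by simp
  also have "\<dots> = (\<integral>\<^sup>+ w. (\<integral>\<^sup>+ x. indicator S (w(i := x)) \<partial>M) \<partial>PM J)"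
    using S i J by (intro PS.product_nn_integral_insert) auto
  also have "\<dots> = (\<integral>\<^sup>+ w. ennreal (h w) \<partial>PM J)"
  proof (rule nn_integral_cong)
    fix w assume w: "w \<in> space (PM J)"
    have mw: "(\<lambda>v. w(i := v)) \<in> measurable M (PM (insert i J))"
      using measurable_component_update[OF w i] by simp
    have set: "{x. w(i:=x) \<in> S} \<in> sets M"
    proof -
      have "{x. w(i:=x) \<in> S} = (\<lambda>v. w(i := v)) -` S \<inter> space M" by auto
      then show ?thesis using measurable_sets[OF mw S] by simp
    qed
    have "(\<integral>\<^sup>+ x. indicator S (w(i := x)) \<partial>M) = (\<integral>\<^sup>+ x. indicator {x. w(i:=x) \<in> S} x \<partial>M)"
      by (intro nn_integral_cong) (simp add: indicator_def)
    also have "\<dots> = emeasure M {x. w(i:=x) \<in> S}"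
      using set by simp
    also have "\<dots> = ennreal (h w)"
      using hS[OF w] RD.emeasure_eq_measure by simp
    finally show "(\<integral>\<^sup>+ x. indicator S (w(i := x)) \<partial>M) = ennreal (h w)" .
  qed
  also have "\<dots> = ennreal (\<integral>w. h w \<partial>PM J)"
    using h01 by (intro nn_integral_eq_integral PJ.integrable_const_bound[where B=1]) auto
  finally have "emeasure (PM (insert i J)) S = ennreal (\<integral>w. h w \<partial>PM J)" .
  moreover have "0 \<le> (\<integral>w. h w \<partial>PM J)" using h01 by simp
  ultimately show ?thesis
    by (simp add: PI.emeasure_eq_measure)
qed

lemma measure_singleton_M: "measure M {c} = 0"
proof -
  have "emeasure M {c} = (\<integral>\<^sup>+ x. ennreal (f x) * indicator {c} x \<partial>lborel)"
    unfolding pert_dist_def using f_meas by (simp add: emeasure_density)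
  also have "\<dots> = 0"
    by (rule nn_integral_null_set) (simp add: finite_imp_null_set_lborel)
  finally show ?thesis by (simp add: measure_def)
qed



end

definition mJ :: "nat \<Rightarrow> real \<Rightarrow> (nat \<Rightarrow> real) \<Rightarrow> nat \<Rightarrow> (nat \<Rightarrow> real) \<Rightarrow> real" where
  "mJ N \<eta> G i w = Max ((\<lambda>j. G j + \<eta> * w j) ` ({..<N} - {i}))"

lemma mJ_upd: "mJ N \<eta> G i (w(i := x)) = mJ N \<eta> G i w"
  unfolding mJ_def by (intro arg_cong[where f=Max] image_cong) auto

lemma mJ_less_iff:
  assumes "2 \<le> N" "i < N"
  shows "mJ N \<eta> G i w < c \<longleftrightarrow> (\<forall>j<N. j \<noteq> i \<longrightarrow> G j + \<eta> * w j < c)"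
proof -
  have ne: "{..<N} - {i} \<noteq> {}"
  proof -
    have "(if i = 0 then 1 else 0) \<in> {..<N} - {i}" using assms by auto
    then show ?thesis by blast
  qed
  show ?thesis unfolding mJ_def using ne by auto
qed


context pert begin

interpretation RD: real_distribution M by (rule real_dist)

lemma mJ_meas_gen: "{..<N} - {i} \<subseteq> I \<Longrightarrow> mJ N \<eta> G i \<in> borel_measurable (PM I)"
  unfolding mJ_def by (intro borel_measurable_Max) auto

lemma mJ_meas[measurable]: "mJ N \<eta> G i \<in> borel_measurable (PM ({..<N} - {i}))"
  by (rule mJ_meas_gen) simp

lemma coord_meas: "i \<in> I \<Longrightarrow> (\<lambda>w. a + b * w i) \<in> borel_measurable (PM I)"
  by measurable

lemma insJ: "i < N \<Longrightarrow> insert i ({..<N} - {i}) = {..<N}" by auto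

lemma upd_space: "w \<in> space (PM J) \<Longrightarrow> w(i := x) \<in> space (PM (insert i J))"
  by (auto simp: space_PiM intro!: PiE_fun_upd)

lemma p_formula:
  assumes N: "2 \<le> N" "i < N" and eta: "\<eta> > 0"
  shows "smooth_grad f N \<eta> G i = (\<integral>w. 1 - F ((mJ N \<eta> G i w - G i) / \<eta>) \<partial>PM ({..<N} - {i}))"
proof -
  let ?J = "{..<N} - {i}"
  let ?S = "{w \<in> space (PM {..<N}). \<forall>j<N. j \<noteq> i \<longrightarrow> G j + \<eta> * w j < G i + \<eta> * w i}"
  have "smooth_grad f N \<eta> G i = measure (PM (insert i ?J)) ?S"
    unfolding smooth_grad_def insJ[OF N(2)] by simp
  also have "\<dots> = (\<integral>w. 1 - F ((mJ N \<eta> G i w - G i) / \<eta>) \<partial>PM ?J)"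
  proof (rule split_measure)
    have "?S = {w \<in> space (PM {..<N}). mJ N \<eta> G i w < G i + \<eta> * w i}"
      using mJ_less_iff[OF N] by auto
    also have "\<dots> \<in> sets (PM {..<N})"
      using mJ_meas_gen[of N i "{..<N}" \<eta> G] coord_meas[of i "{..<N}" "G i" \<eta>] N
      by (intro borel_measurable_less) auto
    finally show "?S \<in> sets (PM (insert i ?J))" unfolding insJ[OF N(2)] .
    fix w assume w: "w \<in> space (PM ?J)"
    have "{x. w(i := x) \<in> ?S} = UNIV - {..(mJ N \<eta> G i w - G i) / \<eta>}"
    proof -
      have "w(i := x) \<in> ?S \<longleftrightarrow> (mJ N \<eta> G i w - G i) / \<eta> < x" for x
      proof -
        have sp: "w(i := x) \<in> space (PM {..<N})"
          using upd_space[OF w, of i x] insJ[OF N(2)] by simp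
        have "w(i := x) \<in> ?S \<longleftrightarrow> mJ N \<eta> G i (w(i := x)) < G i + \<eta> * x"
          using sp mJ_less_iff[OF N, of \<eta> G "w(i := x)" "G i + \<eta> * x"] by auto
        also have "\<dots> \<longleftrightarrow> (mJ N \<eta> G i w - G i) / \<eta> < x"
          using eta by (simp add: mJ_upd divide_simps algebra_simps)
        finally show ?thesis .
      qed
      then show ?thesis by auto
    qed
    then show "measure M {x. w(i := x) \<in> ?S} = 1 - F ((mJ N \<eta> G i w - G i) / \<eta>)"
      using RD.prob_compl[of "{..(mJ N \<eta> G i w - G i) / \<eta>}"] by (simp add: cdf_def)
  next
    show "(\<lambda>w. 1 - F ((mJ N \<eta> G i w - G i) / \<eta>)) \<in> borel_measurable (PM ?J)" by measurable
  qed (auto simp: RD.cdf_nonneg RD.cdf_bounded_prob)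
  finally show ?thesis .
qed


lemma near_formula:
  assumes N: "2 \<le> N" "i < N" and eta: "\<eta> > 0" and L: "0 \<le> L"
  shows "measure (PM {..<N}) {w \<in> space (PM {..<N}). mJ N \<eta> G i w < G i + \<eta> * w i \<and> G i + \<eta> * w i \<le> mJ N \<eta> G i w + L}
     = (\<integral>w. F ((mJ N \<eta> G i w - G i) / \<eta> + L / \<eta>) - F ((mJ N \<eta> G i w - G i) / \<eta>) \<partial>PM ({..<N} - {i}))"
proof -
  let ?J = "{..<N} - {i}"
  let ?S = "{w \<in> space (PM {..<N}). mJ N \<eta> G i w < G i + \<eta> * w i \<and> G i + \<eta> * w i \<le> mJ N \<eta> G i w + L}"
  have "measure (PM {..<N}) ?S = measure (PM (insert i ?J)) ?S"
    unfolding insJ[OF N(2)] by simp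
  also have "\<dots> = (\<integral>w. F ((mJ N \<eta> G i w - G i) / \<eta> + L / \<eta>) - F ((mJ N \<eta> G i w - G i) / \<eta>) \<partial>PM ?J)"
  proof (rule split_measure)
    have m1: "mJ N \<eta> G i \<in> borel_measurable (PM {..<N})" by (rule mJ_meas_gen) auto
    have m2: "(\<lambda>w. G i + \<eta> * w i) \<in> borel_measurable (PM {..<N})" using N by (intro coord_meas) auto
    have m3: "(\<lambda>w. \<eta> * w i) \<in> borel_measurable (PM {..<N})" using N coord_meas[of i "{..<N}" 0 \<eta>] by simp
    have eqS: "?S = {w \<in> space (PM {..<N}). mJ N \<eta> G i w < G i + \<eta> * w i} \<inter> {w \<in> space (PM {..<N}). G i + \<eta> * w i \<le> mJ N \<eta> G i w + L}"
      by auto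
    have "?S \<in> sets (PM {..<N})" unfolding eqS
      using m1 m2 m3 by (intro sets.Int borel_measurable_less borel_measurable_le borel_measurable_add) auto
    then show "?S \<in> sets (PM (insert i ?J))" unfolding insJ[OF N(2)] .
    fix w assume w: "w \<in> space (PM ?J)"
    define y where "y = (mJ N \<eta> G i w - G i) / \<eta>"
    have "{x. w(i := x) \<in> ?S} = {y<..y + L / \<eta>}"
    proof -
      have "w(i := x) \<in> ?S \<longleftrightarrow> y < x \<and> x \<le> y + L / \<eta>" for x
      proof -
        have sp: "w(i := x) \<in> space (PM {..<N})"
          using upd_space[OF w, of i x] insJ[OF N(2)] by simp
        have "w(i := x) \<in> ?S \<longleftrightarrow> mJ N \<eta> G i (w(i := x)) < G i + \<eta> * (w(i := x)) i \<and> G i + \<eta> * (w(i := x)) i \<le> mJ N \<eta> G i (w(i := x)) + L"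
          using sp by blast
        also have "\<dots> \<longleftrightarrow> mJ N \<eta> G i w < G i + \<eta> * x \<and> G i + \<eta> * x \<le> mJ N \<eta> G i w + L"
          by (simp only: mJ_upd fun_upd_same)
        also have "\<dots> \<longleftrightarrow> y < x \<and> x \<le> y + L / \<eta>"
          using eta unfolding y_def by (simp add: divide_simps algebra_simps)
        finally show ?thesis .
      qed
      then show ?thesis
        by (intro set_eqI) (simp only: mem_Collect_eq greaterThanAtMost_iff)
    qed
    moreover have "measure M {y<..y + L / \<eta>} = F (y + L / \<eta>) - F y"
    proof (cases "L = 0")
      case True then show ?thesis by simp
    next
      case False
      then have "y < y + L / \<eta>" using L eta by simp
      then show ?thesis using RD.cdf_diff_eq by simp
    qed
    ultimately show "measure M {x. w(i := x) \<in> ?S} = F ((mJ N \<eta> G i w - G i) / \<eta> + L / \<eta>) - F ((mJ N \<eta> G i w - G i) / \<eta>)"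
      unfolding y_def by simp
  next
    show "(\<lambda>w. F ((mJ N \<eta> G i w - G i) / \<eta> + L / \<eta>) - F ((mJ N \<eta> G i w - G i) / \<eta>)) \<in> borel_measurable (PM ?J)"
      by measurable
    fix w
    show "0 \<le> F ((mJ N \<eta> G i w - G i) / \<eta> + L / \<eta>) - F ((mJ N \<eta> G i w - G i) / \<eta>)"
      using RD.cdf_nondecreasing L eta by simp
    show "F ((mJ N \<eta> G i w - G i) / \<eta> + L / \<eta>) - F ((mJ N \<eta> G i w - G i) / \<eta>) \<le> 1"
      using RD.cdf_nonneg RD.cdf_bounded_prob by (smt (verit))
  qed auto
  finally show ?thesis .
qed

lemma tie_null:
  assumes "j < N" "k < N" "j \<noteq> k" and eta: "\<eta> > 0"
  shows "measure (PM {..<N}) {w \<in> space (PM {..<N}). G j + \<eta> * w j = G k + \<eta> * w k} = 0"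
proof -
  let ?J = "{..<N} - {j}"
  let ?S = "{w \<in> space (PM {..<N}). G j + \<eta> * w j = G k + \<eta> * w k}"
  have ins: "insert j ?J = {..<N}" using assms by auto
  have "measure (PM {..<N}) ?S = measure (PM (insert j ?J)) ?S"
    unfolding ins by simp
  also have "\<dots> = (\<integral>w. 0 \<partial>PM ?J)"
  proof (rule split_measure)
    have m1: "(\<lambda>w. G j + \<eta> * w j) \<in> borel_measurable (PM {..<N})" using assms by (intro coord_meas) auto
    have m2: "(\<lambda>w. G k + \<eta> * w k) \<in> borel_measurable (PM {..<N})" using assms by (intro coord_meas) auto
    have "?S \<in> sets (PM {..<N})"
      using m1 m2 by (intro borel_measurable_eq) auto
    then show "?S \<in> sets (PM (insert j ?J))" unfolding ins .
    fix w assume w: "w \<in> space (PM ?J)"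
    have "{x. w(j := x) \<in> ?S} \<subseteq> {(G k + \<eta> * w k - G j) / \<eta>}"
      using eta assms by (auto simp: field_simps)
    then have "measure M {x. w(j := x) \<in> ?S} \<le> measure M {(G k + \<eta> * w k - G j) / \<eta>}"
      by (intro RD.finite_measure_mono) auto
    then show "measure M {x. w(j := x) \<in> ?S} = 0"
      using measure_singleton_M by (simp add: measure_le_0_iff)
  qed auto
  finally show ?thesis by simp
qed
end

context pert begin

interpretation RD: real_distribution M by (rule real_dist)

lemma E_sets:
  assumes N: "2 \<le> N" "i < N"
  shows "{w \<in> space (PM {..<N}). \<forall>j<N. j \<noteq> i \<longrightarrow> G j + \<eta> * w j < G i + \<eta> * w i} \<in> sets (PM {..<N})"
proof -
  have "{w \<in> space (PM {..<N}). \<forall>j<N. j \<noteq> i \<longrightarrow> G j + \<eta> * w j < G i + \<eta> * w i}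
      = {w \<in> space (PM {..<N}). mJ N \<eta> G i w < G i + \<eta> * w i}"
    using mJ_less_iff[OF N] by auto
  also have "\<dots> \<in> sets (PM {..<N})"
    using mJ_meas_gen[of N i "{..<N}" \<eta> G] coord_meas[of i "{..<N}" "G i" \<eta>] N
    by (intro borel_measurable_less) auto
  finally show ?thesis .
qed

lemma tie_sets:
  assumes "j < N" "k < N"
  shows "{w \<in> space (PM {..<N}). G j + \<eta> * w j = G k + \<eta> * w k} \<in> sets (PM {..<N})"
  using coord_meas[of j "{..<N}" "G j" \<eta>] coord_meas[of k "{..<N}" "G k" \<eta>] assms
  by (intro borel_measurable_eq) auto

lemma sum_p:
  assumes N: "2 \<le> N" and eta: "\<eta> > 0"
  shows "(\<Sum>i<N. smooth_grad f N \<eta> G i) = 1"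
proof -
  interpret P: prob_space "PM {..<N}" by (rule prob_PM)
  define E where "E i = {w \<in> space (PM {..<N}). \<forall>j<N. j \<noteq> i \<longrightarrow> G j + \<eta> * w j < G i + \<eta> * w i}" for i
  define T where "T j k = {w \<in> space (PM {..<N}). G j + \<eta> * w j = G k + \<eta> * w k}" for j k
  have Es: "E i \<in> sets (PM {..<N})" if "i < N" for i
    unfolding E_def using E_sets[OF N that] .
  have Ts: "T j k \<in> sets (PM {..<N})" if "j < N" "k < N" for j k
    unfolding T_def using tie_sets that .
  have T0: "measure (PM {..<N}) (T j k) = 0" if "j < N" "k < N" "j \<noteq> k" for j k
    unfolding T_def using tie_null[OF that eta] .
  define TT where "TT = (\<Union>j\<in>{..<N}. \<Union>k\<in>{..<N} - {j}. T j k)"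
  have TTs: "TT \<in> sets (PM {..<N})" unfolding TT_def using Ts by auto
  have "measure (PM {..<N}) TT \<le> (\<Sum>j\<in>{..<N}. measure (PM {..<N}) (\<Union>k\<in>{..<N} - {j}. T j k))"
    unfolding TT_def using Ts by (intro measure_UNION_le) auto
  also have "\<dots> \<le> (\<Sum>j\<in>{..<N}. \<Sum>k\<in>{..<N} - {j}. measure (PM {..<N}) (T j k))"
    using Ts by (intro sum_mono measure_UNION_le) auto
  also have "\<dots> = 0" using T0 by (intro sum.neutral) auto
  finally have TT0: "measure (PM {..<N}) TT \<le> 0" .
  have disj: "disjoint_family_on E {..<N}"
    unfolding disjoint_family_on_def E_def
  proof (intro ballI impI equalityI subsetI)
    fix i k w assume ik: "i \<in> {..<N}" "k \<in> {..<N}" "i \<noteq> k"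
      and w: "w \<in> {w \<in> space (PM {..<N}). \<forall>j<N. j \<noteq> i \<longrightarrow> G j + \<eta> * w j < G i + \<eta> * w i} \<inter>
                 {w \<in> space (PM {..<N}). \<forall>j<N. j \<noteq> k \<longrightarrow> G j + \<eta> * w j < G k + \<eta> * w k}"
    then have "G k + \<eta> * w k < G i + \<eta> * w i" "G i + \<eta> * w i < G k + \<eta> * w k" by auto
    then show "w \<in> {}" by simp
  qed simp
  have Usum: "measure (PM {..<N}) (\<Union>i\<in>{..<N}. E i) = (\<Sum>i<N. measure (PM {..<N}) (E i))"
    using Es disj by (intro measure_finite_Union) (auto simp: P.emeasure_eq_measure)
  have cover: "space (PM {..<N}) \<subseteq> (\<Union>i\<in>{..<N}. E i) \<union> TT"
  proof
    fix w assume w: "w \<in> space (PM {..<N})"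
    show "w \<in> (\<Union>i\<in>{..<N}. E i) \<union> TT"
    proof (cases "w \<in> TT")
      case False
      let ?V = "(\<lambda>j. G j + \<eta> * w j) ` {..<N}"
      have "0 \<in> {..<N}" using N by simp
      then have "?V \<noteq> {}" by blast
      then have "Max ?V \<in> ?V" by (intro Max_in) auto
      then obtain i where i: "i < N" "Max ?V = G i + \<eta> * w i" by auto
      have "w \<in> E i" unfolding E_def
      proof (intro CollectI conjI allI impI w)
        fix j assume j: "j < N" "j \<noteq> i"
        have "G j + \<eta> * w j \<le> Max ?V" using j by (intro Max_ge) auto
        moreover have "w \<notin> T j i" using False j i unfolding TT_def by auto
        then have "G j + \<eta> * w j \<noteq> G i + \<eta> * w i" using w unfolding T_def by auto
        ultimately show "G j + \<eta> * w j < G i + \<eta> * w i" using i by simp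
      qed
      then show ?thesis using i by auto
    qed simp
  qed
  have "1 = measure (PM {..<N}) (space (PM {..<N}))" using P.prob_space by simp
  also have "\<dots> \<le> measure (PM {..<N}) ((\<Union>i\<in>{..<N}. E i) \<union> TT)"
    using cover Es TTs by (intro P.finite_measure_mono) auto
  also have "\<dots> \<le> measure (PM {..<N}) (\<Union>i\<in>{..<N}. E i) + measure (PM {..<N}) TT"
    using Es TTs by (intro measure_Un_le) auto
  finally have "1 \<le> measure (PM {..<N}) (\<Union>i\<in>{..<N}. E i)" using TT0 by simp
  moreover have "measure (PM {..<N}) (\<Union>i\<in>{..<N}. E i) \<le> 1" by simp
  moreover have "(\<Sum>i<N. smooth_grad f N \<eta> G i) = (\<Sum>i<N. measure (PM {..<N}) (E i))"
    unfolding smooth_grad_def E_def by simp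
  ultimately show ?thesis using Usum by simp
qed

end

definition Phi :: "(real \<Rightarrow> real) \<Rightarrow> nat \<Rightarrow> real \<Rightarrow> (nat \<Rightarrow> real) \<Rightarrow> real" where
  "Phi f N \<eta> G = (\<integral>w. Max ((\<lambda>j. G j + \<eta> * w j) ` {..<N}) \<partial>PiM {..<N} (\<lambda>_. pert_dist f))"

locale pert2 = pert +
  assumes fm: "integrable lborel (\<lambda>z. z * f z)"
begin

interpretation RD: real_distribution M by (rule real_dist)

lemma int_id: "integrable M (\<lambda>z. z)"
proof -
  have i: "integrable lborel (\<lambda>x. f x *\<^sub>R x)" using fm by (simp add: mult.commute)
  have "integrable (density lborel (\<lambda>x. ennreal (f x))) (\<lambda>z. z)"
  proof (subst integrable_density)
    show "(\<lambda>z::real. z) \<in> borel_measurable lborel" by measurable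
    show "f \<in> borel_measurable lborel" using f_meas by (simp add: measurable_lborel1)
    show "AE x in lborel. 0 \<le> f x" using f_nonneg by simp
    show "integrable lborel (\<lambda>x. f x *\<^sub>R x)" by (rule i)
  qed
  then show ?thesis unfolding pert_dist_def .
qed

lemma int_coord:
  assumes "j \<in> I" shows "integrable (PM I) (\<lambda>w. w j)"
proof -
  have m: "(\<lambda>w. w j) \<in> measurable (PM I) M" by (rule measurable_component_singleton[OF assms])
  have d: "distr (PM I) M (\<lambda>w. w j) = M" by (rule distr_PiM_component[OF prob_M assms])
  have "integrable (distr (PM I) M (\<lambda>w. w j)) (\<lambda>z. z)" unfolding d by (rule int_id)
  then show ?thesis using integrable_distr_eq[OF m, of "\<lambda>z. z"] by simp
qed

lemma integral_coord:
  assumes "j \<in> I" shows "(\<integral>w. w j \<partial>PM I) = (\<integral>z. z \<partial>M)"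
proof -
  have m: "(\<lambda>w. w j) \<in> measurable (PM I) M" by (rule measurable_component_singleton[OF assms])
  have d: "distr (PM I) M (\<lambda>w. w j) = M" by (rule distr_PiM_component[OF prob_M assms])
  have "(\<integral>z. z \<partial>distr (PM I) M (\<lambda>w. w j)) = (\<integral>w. w j \<partial>PM I)"
    using integral_distr[OF m, of "\<lambda>z. z"] by simp
  then show ?thesis unfolding d by simp
qed

lemma int_lin:
  assumes "j \<in> I" shows "integrable (PM I) (\<lambda>w. a + b * w j)"
proof -
  interpret P: prob_space "PM I" by (rule prob_PM)
  show ?thesis using int_coord[OF assms]
    by (intro Bochner_Integration.integrable_add integrable_mult_right) auto
qed

lemma integral_lin:
  assumes "j \<in> I" shows "(\<integral>w. a + b * w j \<partial>PM I) = a + b * (\<integral>z. z \<partial>M)"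
proof -
  interpret P: prob_space "PM I" by (rule prob_PM)
  have "(\<integral>w. a + b * w j \<partial>PM I) = (\<integral>w. a \<partial>PM I) + (\<integral>w. b * w j \<partial>PM I)"
    using int_coord[OF assms] by (intro Bochner_Integration.integral_add) auto
  also have "\<dots> = a + b * (\<integral>z. z \<partial>M)"
    using integral_coord[OF assms] P.prob_space by simp
  finally show ?thesis .
qed

lemma int_Max:
  assumes N: "1 \<le> N"
  shows "integrable (PM {..<N}) (\<lambda>w. Max ((\<lambda>j. G j + \<eta> * w j) ` {..<N}))"
proof (rule Bochner_Integration.integrable_bound)
  show "integrable (PM {..<N}) (\<lambda>w. \<Sum>j<N. \<bar>G j + \<eta> * w j\<bar>)"
    by (intro Bochner_Integration.integrable_sum Bochner_Integration.integrable_abs int_lin) auto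
  show "(\<lambda>w. Max ((\<lambda>j. G j + \<eta> * w j) ` {..<N})) \<in> borel_measurable (PM {..<N})"
    using coord_meas by (intro borel_measurable_Max) auto
  show "AE w in PM {..<N}. norm (Max ((\<lambda>j. G j + \<eta> * w j) ` {..<N})) \<le> norm (\<Sum>j<N. \<bar>G j + \<eta> * w j\<bar>)"
  proof (intro AE_I2)
    fix w
    let ?V = "(\<lambda>j. G j + \<eta> * w j) ` {..<N}"
    have "0 \<in> {..<N}" using N by simp
    then have "?V \<noteq> {}" by blast
    then have "Max ?V \<in> ?V" by (intro Max_in) auto
    then obtain i where i: "i < N" "Max ?V = G i + \<eta> * w i" by auto
    have "\<bar>G i + \<eta> * w i\<bar> \<le> (\<Sum>j<N. \<bar>G j + \<eta> * w j\<bar>)"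
      using i by (intro member_le_sum) auto
    then show "norm (Max ?V) \<le> norm (\<Sum>j<N. \<bar>G j + \<eta> * w j\<bar>)"
      using i by simp
  qed
qed

lemma Phi_ge:
  assumes "i < N"
  shows "G i + \<eta> * (\<integral>z. z \<partial>M) \<le> Phi f N \<eta> G"
proof -
  have "G i + \<eta> * (\<integral>z. z \<partial>M) = (\<integral>w. G i + \<eta> * w i \<partial>PM {..<N})"
    using assms integral_lin[of i "{..<N}" "G i" \<eta>] by simp
  also have "\<dots> \<le> Phi f N \<eta> G"
    unfolding Phi_def using assms
    by (intro integral_mono int_lin int_Max Max_ge) auto
  finally show ?thesis .
qed

lemma Phi0:
  assumes "0 \<le> \<eta>" "1 \<le> N"
  shows "Phi f N \<eta> (\<lambda>_. 0) = \<eta> * exp_max f N"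
proof -
  have "Max ((\<lambda>j. 0 + \<eta> * w j) ` {..<N}) = \<eta> * Max (w ` {..<N})" for w :: "nat \<Rightarrow> real"
  proof -
    have "mono ((*) \<eta>)" using assms by (auto simp: mono_def mult_left_mono)
    moreover have "0 \<in> {..<N}" using assms by simp
    then have "w ` {..<N} \<noteq> {}" by blast
    ultimately have "\<eta> * Max (w ` {..<N}) = Max ((*) \<eta> ` (w ` {..<N}))"
      by (intro mono_Max_commute) auto
    then show ?thesis by (simp add: image_image)
  qed
  then show ?thesis unfolding Phi_def exp_max_def by simp
qed


lemma pointwise_div:
  assumes N: "2 \<le> N" "i < N" and L: "0 \<le> L"
  shows "Max ((\<lambda>j. (G(i := G i - L)) j + \<eta> * w j) ` {..<N}) - Max ((\<lambda>j. G j + \<eta> * w j) ` {..<N})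
    + L * indicator {w. \<forall>j<N. j \<noteq> i \<longrightarrow> G j + \<eta> * w j < G i + \<eta> * w i} w
    \<le> L * indicator {w. mJ N \<eta> G i w < G i + \<eta> * w i \<and> G i + \<eta> * w i \<le> mJ N \<eta> G i w + L} w"
proof -
  let ?J = "{..<N} - {i}"
  have J: "finite ?J" "?J \<noteq> {}"
  proof -
    have "(if i = 0 then 1 else 0) \<in> ?J" using N by auto
    then show "?J \<noteq> {}" by blast
  qed simp
  have ins: "{..<N} = insert i ?J" using N by auto
  define m where "m = mJ N \<eta> G i w"
  define u where "u = G i + \<eta> * w i"
  have "(\<lambda>j. (G(i := G i - L)) j + \<eta> * w j) ` ?J = (\<lambda>j. G j + \<eta> * w j) ` ?J"
    by (intro image_cong) auto
  then have A: "Max ((\<lambda>j. (G(i := G i - L)) j + \<eta> * w j) ` {..<N}) = max (u - L) m"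
    unfolding m_def u_def mJ_def
    by (subst ins, subst image_insert, subst Max_insert) (use J in auto)
  have B: "Max ((\<lambda>j. G j + \<eta> * w j) ` {..<N}) = max u m"
    unfolding m_def u_def mJ_def
    by (subst ins, subst image_insert, subst Max_insert) (use J in auto)
  have E: "w \<in> {w. \<forall>j<N. j \<noteq> i \<longrightarrow> G j + \<eta> * w j < G i + \<eta> * w i} \<longleftrightarrow> m < u"
    unfolding m_def u_def using mJ_less_iff[OF N, of \<eta> G w] by simp
  have S: "w \<in> {w. mJ N \<eta> G i w < G i + \<eta> * w i \<and> G i + \<eta> * w i \<le> mJ N \<eta> G i w + L} \<longleftrightarrow> m < u \<and> u \<le> m + L"
    unfolding m_def u_def by simp
  show ?thesis
    unfolding A B indicator_def using E S L by (auto simp: max_def)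
qed

lemma div_bound:
  assumes N: "2 \<le> N" "i < N" and eta: "\<eta> > 0" and L: "0 \<le> L"
    and Lp: "L * smooth_grad f N \<eta> G i \<le> 1"
  shows "smooth_grad f N \<eta> G i * (Phi f N \<eta> (G(i := G i - L)) - Phi f N \<eta> G + L * smooth_grad f N \<eta> G i)
     \<le> 2 * C / ((1 - \<alpha>) * \<eta> powr (1 - \<alpha>))"
proof -
  interpret P: prob_space "PM {..<N}" by (rule prob_PM)
  interpret PJ: prob_space "PM ({..<N} - {i})" by (rule prob_PM)
  define p where "p = smooth_grad f N \<eta> G i"
  define b where "b = 1 - \<alpha>"
  define K where "K = 2 * C / (1 - \<alpha>)"
  have b: "0 < b" "b \<le> 1" unfolding b_def using alpha0 alpha1 by auto
  have K: "0 \<le> K" unfolding K_def using C_pos alpha1 by simp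
  define y where "y w = (mJ N \<eta> G i w - G i) / \<eta>" for w
  define E where "E = {w \<in> space (PM {..<N}). \<forall>j<N. j \<noteq> i \<longrightarrow> G j + \<eta> * w j < G i + \<eta> * w i}"
  define S where "S = {w \<in> space (PM {..<N}). mJ N \<eta> G i w < G i + \<eta> * w i \<and> G i + \<eta> * w i \<le> mJ N \<eta> G i w + L}"
  have Es: "E \<in> sets (PM {..<N})" unfolding E_def by (rule E_sets[OF N])
  have Ss: "S \<in> sets (PM {..<N})"
  proof -
    have "S = (\<lambda>x. x) -` {w \<in> space (PM {..<N}). mJ N \<eta> G i w < G i + \<eta> * w i} \<inter> {w \<in> space (PM {..<N}). G i + \<eta> * w i \<le> mJ N \<eta> G i w + L}"
      unfolding S_def by auto
    moreover have m1: "mJ N \<eta> G i \<in> borel_measurable (PM {..<N})" by (rule mJ_meas_gen) auto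
    moreover have m2: "(\<lambda>w. G i + \<eta> * w i) \<in> borel_measurable (PM {..<N})" using N by (intro coord_meas) auto
    moreover have m3: "(\<lambda>w. \<eta> * w i) \<in> borel_measurable (PM {..<N})" using N coord_meas[of i "{..<N}" 0 \<eta>] by simp
    ultimately show ?thesis
      by (simp only: vimage_ident) (intro sets.Int borel_measurable_less borel_measurable_le borel_measurable_add; auto)
  qed
  have p_meas: "p = measure (PM {..<N}) E" unfolding p_def smooth_grad_def E_def by simp
  have p0: "0 \<le> p" unfolding p_meas by simp
  have IA: "integrable (PM {..<N}) (\<lambda>w. Max ((\<lambda>j. (G(i := G i - L)) j + \<eta> * w j) ` {..<N}))"
    using N by (intro int_Max) auto
  have IB: "integrable (PM {..<N}) (\<lambda>w. Max ((\<lambda>j. G j + \<eta> * w j) ` {..<N}))"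
    using N by (intro int_Max) auto
  have IE: "integrable (PM {..<N}) (\<lambda>w. L * indicator E w)"
    using Es by (intro integrable_mult_right integrable_real_indicator) (auto simp: P.emeasure_eq_measure)
  have IS: "integrable (PM {..<N}) (\<lambda>w. L * indicator S w)"
    using Ss by (intro integrable_mult_right integrable_real_indicator) (auto simp: P.emeasure_eq_measure)
  have "Phi f N \<eta> (G(i := G i - L)) - Phi f N \<eta> G + L * p
      = (\<integral>w. Max ((\<lambda>j. (G(i := G i - L)) j + \<eta> * w j) ` {..<N}) - Max ((\<lambda>j. G j + \<eta> * w j) ` {..<N})
           + L * indicator E w \<partial>PM {..<N})"
  proof -
    have hL: "(\<integral>w. L * indicator E w \<partial>PM {..<N}) = L * p"
      unfolding p_meas using Es sets.sets_into_space[OF Es] by (simp add: Int_absorb2)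
    have e1: "(\<integral>w. Max ((\<lambda>j. (G(i := G i - L)) j + \<eta> * w j) ` {..<N}) - Max ((\<lambda>j. G j + \<eta> * w j) ` {..<N})
           + L * indicator E w \<partial>PM {..<N}) = (\<integral>w. Max ((\<lambda>j. (G(i := G i - L)) j + \<eta> * w j) ` {..<N}) - Max ((\<lambda>j. G j + \<eta> * w j) ` {..<N}) \<partial>PM {..<N})
           + (\<integral>w. L * indicator E w \<partial>PM {..<N})"
      by (rule Bochner_Integration.integral_add[OF Bochner_Integration.integrable_diff[OF IA IB] IE])
    have e2: "(\<integral>w. Max ((\<lambda>j. (G(i := G i - L)) j + \<eta> * w j) ` {..<N}) - Max ((\<lambda>j. G j + \<eta> * w j) ` {..<N}) \<partial>PM {..<N})
       = (\<integral>w. Max ((\<lambda>j. (G(i := G i - L)) j + \<eta> * w j) ` {..<N}) \<partial>PM {..<N}) - (\<integral>w. Max ((\<lambda>j. G j + \<eta> * w j) ` {..<N}) \<partial>PM {..<N})"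
      by (rule Bochner_Integration.integral_diff[OF IA IB])
    show ?thesis unfolding Phi_def e1 e2 hL ..
  qed
  also have "\<dots> \<le> (\<integral>w. L * indicator S w \<partial>PM {..<N})"
  proof (rule integral_mono)
    show "integrable (PM {..<N}) (\<lambda>w. Max ((\<lambda>j. (G(i := G i - L)) j + \<eta> * w j) ` {..<N}) - Max ((\<lambda>j. G j + \<eta> * w j) ` {..<N})
           + L * indicator E w)"
      using IA IB IE by (intro Bochner_Integration.integrable_add Bochner_Integration.integrable_diff)
    show "integrable (PM {..<N}) (\<lambda>w. L * indicator S w)" by (rule IS)
    fix w assume w: "w \<in> space (PM {..<N})"
    have "indicator E w = (indicator {w. \<forall>j<N. j \<noteq> i \<longrightarrow> G j + \<eta> * w j < G i + \<eta> * w i} w :: real)"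
      "indicator S w = (indicator {w. mJ N \<eta> G i w < G i + \<eta> * w i \<and> G i + \<eta> * w i \<le> mJ N \<eta> G i w + L} w :: real)"
      unfolding E_def S_def using w by (simp_all add: indicator_def)
    then show "Max ((\<lambda>j. (G(i := G i - L)) j + \<eta> * w j) ` {..<N}) - Max ((\<lambda>j. G j + \<eta> * w j) ` {..<N})
           + L * indicator E w \<le> L * indicator S w"
      using pointwise_div[OF N L, of G \<eta> w] by simp
  qed
  also have "\<dots> = L * measure (PM {..<N}) S"
    using Ss sets.sets_into_space[OF Ss] by (simp add: Int_absorb2)
  finally have step1: "Phi f N \<eta> (G(i := G i - L)) - Phi f N \<eta> G + L * p \<le> L * measure (PM {..<N}) S" .
  have nf: "measure (PM {..<N}) S = (\<integral>w. F (y w + L / \<eta>) - F (y w) \<partial>PM ({..<N} - {i}))"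
    unfolding S_def y_def by (rule near_formula[OF N eta L])
  have pf: "p = (\<integral>w. 1 - F (y w) \<partial>PM ({..<N} - {i}))"
    unfolding p_def y_def by (rule p_formula[OF N eta])
  have RHS: "2 * C / ((1 - \<alpha>) * \<eta> powr (1 - \<alpha>)) = K / \<eta> powr b"
    unfolding K_def b_def by simp
  show ?thesis
  proof (cases "p = 0")
    case True
    then show ?thesis using K eta unfolding p_def[symmetric] RHS by simp
  next
    case False
    then have ppos: "0 < p" using p0 by simp
    have ym[measurable]: "y \<in> borel_measurable (PM ({..<N} - {i}))"
      unfolding y_def by measurable
    have Fb: "0 \<le> F x" "F x \<le> 1" "F x < 1" for x using RD.cdf_nonneg RD.cdf_bounded_prob unb by auto
    have int1: "integrable (PM ({..<N} - {i})) (\<lambda>w. F (y w + L / \<eta>) - F (y w))"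
    proof (rule PJ.integrable_const_bound[where B=1])
      show "AE w in PM ({..<N} - {i}). norm (F (y w + L / \<eta>) - F (y w)) \<le> 1"
      proof (intro AE_I2)
        fix w
        show "norm (F (y w + L / \<eta>) - F (y w)) \<le> 1"
          using Fb(1)[of "y w"] Fb(1)[of "y w + L / \<eta>"] Fb(2)[of "y w"] Fb(2)[of "y w + L / \<eta>"]
          by (simp add: abs_le_iff)
      qed
    qed measurable
    have int2: "integrable (PM ({..<N} - {i})) (\<lambda>w. (1 - F (y w)) powr b)"
    proof (rule PJ.integrable_const_bound[where B=1])
      show "AE w in PM ({..<N} - {i}). norm ((1 - F (y w)) powr b) \<le> 1"
        using Fb b by (intro AE_I2) (simp add: powr_le1)
    qed measurable
    have int3: "integrable (PM ({..<N} - {i})) (\<lambda>w. 1 - F (y w))"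
    proof (rule PJ.integrable_const_bound[where B=1])
      show "AE w in PM ({..<N} - {i}). norm (1 - F (y w)) \<le> 1"
        using Fb by (intro AE_I2) auto
    qed measurable
    have "measure (PM {..<N}) S \<le> (\<integral>w. K * (L / \<eta>) powr b * (1 - F (y w)) powr b \<partial>PM ({..<N} - {i}))"
      unfolding nf
    proof (rule integral_mono[OF int1])
      show "integrable (PM ({..<N} - {i})) (\<lambda>w. K * (L / \<eta>) powr b * (1 - F (y w)) powr b)"
        using int2 by (intro integrable_mult_right)
      fix w
      show "F (y w + L / \<eta>) - F (y w) \<le> K * (L / \<eta>) powr b * (1 - F (y w)) powr b"
        using L1[of "L / \<eta>" "y w"] L eta unfolding K_def b_def by (simp add: mult_ac)
    qed
    also have "\<dots> = K * (L / \<eta>) powr b * (\<integral>w. (1 - F (y w)) powr b \<partial>PM ({..<N} - {i}))"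
      by simp
    also have "\<dots> \<le> K * (L / \<eta>) powr b * p powr b"
    proof (rule mult_left_mono)
      show "0 \<le> K * (L / \<eta>) powr b" using K by simp
      have "(\<integral>w. (1 - F (y w)) powr b \<partial>PM ({..<N} - {i}))
          \<le> (\<integral>w. p powr b * (b / p) * (1 - F (y w)) + p powr b * (1 - b) \<partial>PM ({..<N} - {i}))"
      proof (rule integral_mono[OF int2])
        show "integrable (PM ({..<N} - {i})) (\<lambda>w. p powr b * (b / p) * (1 - F (y w)) + p powr b * (1 - b))"
          using int3 by (intro Bochner_Integration.integrable_add integrable_mult_right) auto
        fix w
        define v where "v = 1 - F (y w)"
        have v: "0 < v" unfolding v_def using Fb by simp
        have "(v / p) powr b * 1 powr (1 - b) \<le> b * (v / p) + (1 - b) * 1"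
          using Youngs_inequality_0[of b "1 - b" "v / p" 1] b v ppos by simp
        then have "v powr b / p powr b \<le> b * (v / p) + (1 - b)"
          using v ppos by (simp add: powr_divide)
        then have "v powr b \<le> p powr b * (b * (v / p) + (1 - b))"
          using ppos by (simp add: divide_simps mult.commute)
        then show "(1 - F (y w)) powr b \<le> p powr b * (b / p) * (1 - F (y w)) + p powr b * (1 - b)"
          unfolding v_def[symmetric] by (simp add: algebra_simps)
      qed
      also have "\<dots> = p powr b * (b / p) * p + p powr b * (1 - b)"
        using int3 pf PJ.prob_space
        by (subst Bochner_Integration.integral_add) (auto intro!: integrable_mult_right)
      also have "\<dots> = p powr b" using ppos by (simp add: algebra_simps)
      finally show "(\<integral>w. (1 - F (y w)) powr b \<partial>PM ({..<N} - {i})) \<le> p powr b" .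
    qed
    finally have mS: "measure (PM {..<N}) S \<le> K * (L / \<eta>) powr b * p powr b" .
    have "p * (Phi f N \<eta> (G(i := G i - L)) - Phi f N \<eta> G + L * p) \<le> p * (L * measure (PM {..<N}) S)"
      using step1 p0 by (intro mult_left_mono)
    also have "\<dots> \<le> p * (L * (K * (L / \<eta>) powr b * p powr b))"
      using mS p0 L by (intro mult_left_mono) auto
    also have "\<dots> = K * ((p * L) * (p * L) powr b) / \<eta> powr b"
      using L ppos eta by (simp add: powr_divide powr_mult field_simps)
    also have "\<dots> \<le> K * 1 / \<eta> powr b"
    proof -
      have q: "0 \<le> p * L" "p * L \<le> 1" using p0 L Lp unfolding p_def by (auto simp: mult.commute)
      then have "(p * L) powr b \<le> 1" by (intro powr_le1) (use b in auto)
      then have "(p * L) * (p * L) powr b \<le> 1" using q by (simp add: mult_le_one)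
      then show ?thesis using K eta by (intro divide_right_mono mult_left_mono) auto
    qed
    finally show ?thesis unfolding p_def RHS by simp
  qed
qed
end

lemma G_local:
  "(\<forall>s\<in>{1..t}. a s = b s) \<Longrightarrow> gbpa_G f N \<eta> g a t = gbpa_G f N \<eta> g b t"
proof (induction t)
  case 0 then show ?case by simp
next
  case (Suc t)
  then have "gbpa_G f N \<eta> g a t = gbpa_G f N \<eta> g b t" by auto
  moreover have "a (Suc t) = b (Suc t)" using Suc.prems by auto
  ultimately show ?case by (simp add: Let_def)
qed

lemma G_upd: "t \<le> T \<Longrightarrow> gbpa_G f N \<eta> g (a(Suc T := i)) t = gbpa_G f N \<eta> g a t"
  by (rule G_local) auto

lemma G_step:
  "gbpa_G f N \<eta> g (a(Suc T := i)) (Suc T) =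
     (gbpa_G f N \<eta> g a T)(i := gbpa_G f N \<eta> g a T i + g (Suc T) i / smooth_grad f N \<eta> (gbpa_G f N \<eta> g a T) i)"
  by (simp add: Let_def G_upd)

lemma W_step:
  "gbpa_path_prob f N \<eta> g (Suc T) (a(Suc T := i)) =
     gbpa_path_prob f N \<eta> g T a * smooth_grad f N \<eta> (gbpa_G f N \<eta> g a T) i"
proof -
  have "gbpa_path_prob f N \<eta> g (Suc T) (a(Suc T := i)) =
      (\<Prod>t\<in>{1..T}. smooth_grad f N \<eta> (gbpa_G f N \<eta> g (a(Suc T := i)) (t - 1)) ((a(Suc T := i)) t))
      * smooth_grad f N \<eta> (gbpa_G f N \<eta> g (a(Suc T := i)) T) i"
    unfolding gbpa_path_prob_def by (simp add: prod.cl_ivl_Suc)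
  also have "(\<Prod>t\<in>{1..T}. smooth_grad f N \<eta> (gbpa_G f N \<eta> g (a(Suc T := i)) (t - 1)) ((a(Suc T := i)) t))
      = gbpa_path_prob f N \<eta> g T a"
    unfolding gbpa_path_prob_def
  proof (intro prod.cong refl)
    fix t assume t: "t \<in> {1..T}"
    then have "t \<le> T" by simp
    then have "t - 1 \<le> T" by arith
    then show "smooth_grad f N \<eta> (gbpa_G f N \<eta> g (a(Suc T := i)) (t - 1)) ((a(Suc T := i)) t)
      = smooth_grad f N \<eta> (gbpa_G f N \<eta> g a (t - 1)) (a t)"
      using t by (simp add: G_upd)
  qed
  finally show ?thesis by (simp only: G_upd[OF order_refl])
qed

lemma sum_step:
  "(\<Sum>b\<in>PiE {1..Suc T} (\<lambda>_. {..<N}). h b) = (\<Sum>a\<in>PiE {1..T} (\<lambda>_. {..<N}). \<Sum>i<N. h (a(Suc T := i)))"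
proof -
  have ins: "{1..Suc T} = insert (Suc T) {1..T}" by auto
  have nin: "Suc T \<notin> {1..T}" by simp
  have "(\<Sum>b\<in>PiE {1..Suc T} (\<lambda>_. {..<N}). h b)
      = (\<Sum>b\<in>(\<lambda>(y, g). g(Suc T := y)) ` ({..<N} \<times> PiE {1..T} (\<lambda>_. {..<N})). h b)"
    unfolding ins PiE_insert_eq by simp
  also have "\<dots> = (\<Sum>(y, a)\<in>{..<N} \<times> PiE {1..T} (\<lambda>_. {..<N}). h (a(Suc T := y)))"
    by (subst sum.reindex[OF inj_combinator[OF nin]]) (simp add: case_prod_unfold)
  also have "\<dots> = (\<Sum>y<N. \<Sum>a\<in>PiE {1..T} (\<lambda>_. {..<N}). h (a(Suc T := y)))"
    by (subst sum.cartesian_product[symmetric]) simp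
  also have "\<dots> = (\<Sum>a\<in>PiE {1..T} (\<lambda>_. {..<N}). \<Sum>i<N. h (a(Suc T := i)))"
    by (rule sum.swap)
  finally show ?thesis .
qed

lemma W_nonneg: "0 \<le> gbpa_path_prob f N \<eta> g T a"
  unfolding gbpa_path_prob_def smooth_grad_def by (intro prod_nonneg) auto

lemma sum_over_step:
  "(\<Sum>b\<in>PiE {1..Suc T} (\<lambda>_. {..<N}). gbpa_path_prob f N \<eta> g (Suc T) b * X b)
   = (\<Sum>a\<in>PiE {1..T} (\<lambda>_. {..<N}). gbpa_path_prob f N \<eta> g T a *
        (\<Sum>i<N. smooth_grad f N \<eta> (gbpa_G f N \<eta> g a T) i * X (a(Suc T := i))))"
  unfolding sum_step W_step by (simp add: sum_distrib_left mult_ac)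


context pert2 begin

lemma Wsum:
  assumes N: "2 \<le> N" and eta: "\<eta> > 0"
  shows "(\<Sum>a\<in>PiE {1..T} (\<lambda>_. {..<N}). gbpa_path_prob f N \<eta> g T a) = 1"
proof (induction T)
  case 0 then show ?case by (simp add: gbpa_path_prob_def)
next
  case (Suc T)
  have "(\<Sum>a\<in>PiE {1..Suc T} (\<lambda>_. {..<N}). gbpa_path_prob f N \<eta> g (Suc T) a)
      = (\<Sum>a\<in>PiE {1..Suc T} (\<lambda>_. {..<N}). gbpa_path_prob f N \<eta> g (Suc T) a * 1)" by simp
  also have "\<dots> = (\<Sum>a\<in>PiE {1..T} (\<lambda>_. {..<N}). gbpa_path_prob f N \<eta> g T a *
        (\<Sum>i<N. smooth_grad f N \<eta> (gbpa_G f N \<eta> g a T) i * 1))"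
    by (rule sum_over_step)
  also have "\<dots> = (\<Sum>a\<in>PiE {1..T} (\<lambda>_. {..<N}). gbpa_path_prob f N \<eta> g T a)"
    using sum_p[OF N eta] by simp
  finally show ?case using Suc.IH by simp
qed

lemma step_bound:
  assumes N: "2 \<le> N" "i < N" and eta: "\<eta> > 0" and gi: "-1 \<le> gi" "gi \<le> 0"
  shows "smooth_grad f N \<eta> G i * (Phi f N \<eta> (G(i := G i + gi / smooth_grad f N \<eta> G i)) - S - gi)
    \<le> smooth_grad f N \<eta> G i * (Phi f N \<eta> G - S) + 2 * C / ((1 - \<alpha>) * \<eta> powr (1 - \<alpha>))"
proof -
  define p where "p = smooth_grad f N \<eta> G i"
  have p0: "0 \<le> p" unfolding p_def smooth_grad_def by simp
  have B0: "0 \<le> 2 * C / ((1 - \<alpha>) * \<eta> powr (1 - \<alpha>))" using C_pos alpha1 eta by simp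
  show ?thesis
  proof (cases "p = 0")
    case True then show ?thesis using B0 unfolding p_def[symmetric] by simp
  next
    case False
    then have pp: "0 < p" using p0 by simp
    define L where "L = - gi / p"
    have L0: "0 \<le> L" unfolding L_def using gi pp by (simp add: divide_nonpos_pos)
    have Lp: "L * p = - gi" unfolding L_def using pp by simp
    have eqG: "G(i := G i - L) = G(i := G i + gi / p)" unfolding L_def by simp
    have "L * p \<le> 1" using Lp gi by simp
    then have "p * (Phi f N \<eta> (G(i := G i - L)) - Phi f N \<eta> G + L * p) \<le> 2 * C / ((1 - \<alpha>) * \<eta> powr (1 - \<alpha>))"
      using div_bound[OF N eta L0, of G] unfolding p_def by simp
    moreover have "Phi f N \<eta> (G(i := G i - L)) - Phi f N \<eta> G + L * p = Phi f N \<eta> (G(i := G i - L)) - Phi f N \<eta> G - gi"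
      using Lp by simp
    ultimately have "p * (Phi f N \<eta> (G(i := G i - L)) - Phi f N \<eta> G - gi) \<le> 2 * C / ((1 - \<alpha>) * \<eta> powr (1 - \<alpha>))"
      by simp
    then have "p * (Phi f N \<eta> (G(i := G i + gi / p)) - Phi f N \<eta> G - gi) \<le> 2 * C / ((1 - \<alpha>) * \<eta> powr (1 - \<alpha>))"
      by (simp only: eqG)
    then show ?thesis unfolding p_def[symmetric] by (simp add: algebra_simps)
  qed
qed

lemma Vbound:
  assumes N: "2 \<le> N" and eta: "\<eta> > 0"
    and gs: "\<forall>t\<in>{1..T}. \<forall>i<N. -1 \<le> g t i \<and> g t i \<le> 0"
  shows "(\<Sum>a\<in>PiE {1..T} (\<lambda>_. {..<N}). gbpa_path_prob f N \<eta> g T a *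
            (Phi f N \<eta> (gbpa_G f N \<eta> g a T) - (\<Sum>t\<in>{1..T}. g t (a t))))
         \<le> Phi f N \<eta> (\<lambda>_. 0) + real T * real N * (2 * C / ((1 - \<alpha>) * \<eta> powr (1 - \<alpha>)))"
  using gs
proof (induction T)
  case 0 then show ?case by (simp add: gbpa_path_prob_def)
next
  case (Suc T)
  define B where "B = 2 * C / ((1 - \<alpha>) * \<eta> powr (1 - \<alpha>))"
  have gsT: "\<forall>t\<in>{1..T}. \<forall>i<N. -1 \<le> g t i \<and> g t i \<le> 0" using Suc.prems by auto
  have gS: "-1 \<le> g (Suc T) i" "g (Suc T) i \<le> 0" if "i < N" for i using Suc.prems that by auto
  let ?A = "PiE {1..T} (\<lambda>_. {..<N})"
  let ?W = "gbpa_path_prob f N \<eta> g T"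
  let ?p = "\<lambda>a. smooth_grad f N \<eta> (gbpa_G f N \<eta> g a T)"
  let ?S = "\<lambda>a. (\<Sum>t\<in>{1..T}. g t (a t))"
  have sumS: "(\<Sum>t\<in>{1..Suc T}. g t ((a(Suc T := i)) t)) = ?S a + g (Suc T) i" for a i
  proof -
    have "(\<Sum>t\<in>{1..Suc T}. g t ((a(Suc T := i)) t)) = (\<Sum>t\<in>{1..T}. g t ((a(Suc T := i)) t)) + g (Suc T) i"
      by (simp add: sum.cl_ivl_Suc)
    also have "(\<Sum>t\<in>{1..T}. g t ((a(Suc T := i)) t)) = ?S a" by (intro sum.cong) auto
    finally show ?thesis .
  qed
  have "(\<Sum>b\<in>PiE {1..Suc T} (\<lambda>_. {..<N}). gbpa_path_prob f N \<eta> g (Suc T) b *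
            (Phi f N \<eta> (gbpa_G f N \<eta> g b (Suc T)) - (\<Sum>t\<in>{1..Suc T}. g t (b t))))
     = (\<Sum>a\<in>?A. ?W a * (\<Sum>i<N. ?p a i *
          (Phi f N \<eta> (gbpa_G f N \<eta> g (a(Suc T := i)) (Suc T)) - (\<Sum>t\<in>{1..Suc T}. g t ((a(Suc T := i)) t)))))"
    by (rule sum_over_step)
  also have "\<dots> \<le> (\<Sum>a\<in>?A. ?W a * (Phi f N \<eta> (gbpa_G f N \<eta> g a T) - ?S a + real N * B))"
  proof (intro sum_mono mult_left_mono W_nonneg)
    fix a
    let ?G = "gbpa_G f N \<eta> g a T"
    have "(\<Sum>i<N. ?p a i * (Phi f N \<eta> (gbpa_G f N \<eta> g (a(Suc T := i)) (Suc T)) - (\<Sum>t\<in>{1..Suc T}. g t ((a(Suc T := i)) t))))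
        = (\<Sum>i<N. ?p a i * (Phi f N \<eta> (?G(i := ?G i + g (Suc T) i / ?p a i)) - ?S a - g (Suc T) i))"
      by (intro sum.cong refl) (simp only: G_step sumS diff_diff_eq)
    also have "\<dots> \<le> (\<Sum>i<N. ?p a i * (Phi f N \<eta> ?G - ?S a) + B)"
      unfolding B_def using gS by (intro sum_mono step_bound[OF N _ eta]) auto
    also have "\<dots> = (Phi f N \<eta> ?G - ?S a) * (\<Sum>i<N. ?p a i) + real N * B"
      by (simp add: sum.distrib sum_distrib_right mult.commute)
    also have "\<dots> = Phi f N \<eta> ?G - ?S a + real N * B"
      using sum_p[OF N eta] by simp
    finally show "(\<Sum>i<N. ?p a i * (Phi f N \<eta> (gbpa_G f N \<eta> g (a(Suc T := i)) (Suc T)) - (\<Sum>t\<in>{1..Suc T}. g t ((a(Suc T := i)) t))))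
        \<le> Phi f N \<eta> ?G - ?S a + real N * B" .
  qed
  also have "\<dots> = (\<Sum>a\<in>?A. ?W a * (Phi f N \<eta> (gbpa_G f N \<eta> g a T) - ?S a) + real N * B * ?W a)"
    by (intro sum.cong refl) (simp add: algebra_simps)
  also have "\<dots> = (\<Sum>a\<in>?A. ?W a * (Phi f N \<eta> (gbpa_G f N \<eta> g a T) - ?S a)) + real N * B * (\<Sum>a\<in>?A. ?W a)"
    by (simp only: sum.distrib sum_distrib_left[symmetric])
  also have "\<dots> = (\<Sum>a\<in>?A. ?W a * (Phi f N \<eta> (gbpa_G f N \<eta> g a T) - ?S a)) + real N * B"
    using Wsum[OF N eta] by simp
  also have "\<dots> \<le> Phi f N \<eta> (\<lambda>_. 0) + real T * real N * B + real N * B"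
    using Suc.IH[OF gsT] unfolding B_def by simp
  also have "\<dots> = Phi f N \<eta> (\<lambda>_. 0) + real (Suc T) * real N * B"
    by (simp add: algebra_simps)
  finally have fin: "(\<Sum>b\<in>PiE {1..Suc T} (\<lambda>_. {..<N}). gbpa_path_prob f N \<eta> g (Suc T) b *
            (Phi f N \<eta> (gbpa_G f N \<eta> g b (Suc T)) - (\<Sum>t\<in>{1..Suc T}. g t (b t))))
     \<le> Phi f N \<eta> (\<lambda>_. 0) + real (Suc T) * real N * B" .
  show ?case unfolding B_def[symmetric] by (rule fin)
qed

lemma Ybound:
  assumes N: "2 \<le> N" and eta: "\<eta> > 0" and j: "j < N"
    and gs: "\<forall>t\<in>{1..T}. \<forall>i<N. -1 \<le> g t i \<and> g t i \<le> 0"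
  shows "(\<Sum>t\<in>{1..T}. g t j) \<le> (\<Sum>a\<in>PiE {1..T} (\<lambda>_. {..<N}). gbpa_path_prob f N \<eta> g T a * gbpa_G f N \<eta> g a T j)"
  using gs
proof (induction T)
  case 0 then show ?case by (simp add: gbpa_path_prob_def)
next
  case (Suc T)
  have gsT: "\<forall>t\<in>{1..T}. \<forall>i<N. -1 \<le> g t i \<and> g t i \<le> 0" using Suc.prems by auto
  have gS: "g (Suc T) j \<le> 0" using Suc.prems j by auto
  let ?A = "PiE {1..T} (\<lambda>_. {..<N})"
  let ?W = "gbpa_path_prob f N \<eta> g T"
  let ?p = "\<lambda>a. smooth_grad f N \<eta> (gbpa_G f N \<eta> g a T)"
  have "(\<Sum>t\<in>{1..Suc T}. g t j) = (\<Sum>t\<in>{1..T}. g t j) + g (Suc T) j"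
    by (simp add: sum.cl_ivl_Suc)
  also have "\<dots> \<le> (\<Sum>a\<in>?A. ?W a * gbpa_G f N \<eta> g a T j) + g (Suc T) j * (\<Sum>a\<in>?A. ?W a)"
    using Suc.IH[OF gsT] Wsum[OF N eta] by simp
  also have "\<dots> = (\<Sum>a\<in>?A. ?W a * gbpa_G f N \<eta> g a T j + g (Suc T) j * ?W a)"
    by (simp only: sum.distrib sum_distrib_left)
  also have "\<dots> = (\<Sum>a\<in>?A. ?W a * (gbpa_G f N \<eta> g a T j + g (Suc T) j))"
    by (intro sum.cong refl) (simp add: algebra_simps)
  also have "\<dots> \<le> (\<Sum>a\<in>?A. ?W a * (\<Sum>i<N. ?p a i * gbpa_G f N \<eta> g (a(Suc T := i)) (Suc T) j))"
  proof (intro sum_mono mult_left_mono W_nonneg)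
    fix a
    let ?G = "gbpa_G f N \<eta> g a T"
    have "(\<Sum>i<N. ?p a i * gbpa_G f N \<eta> g (a(Suc T := i)) (Suc T) j)
        = (\<Sum>i<N. ?p a i * ?G j + (if i = j then ?p a j * (g (Suc T) j / ?p a j) else 0))"
      by (intro sum.cong refl) (simp only: G_step, simp add: algebra_simps)
    also have "\<dots> = ?G j * (\<Sum>i<N. ?p a i) + ?p a j * (g (Suc T) j / ?p a j)"
      using j by (simp add: sum.distrib sum_distrib_left mult.commute)
    also have "\<dots> = ?G j + ?p a j * (g (Suc T) j / ?p a j)"
      using sum_p[OF N eta] by simp
    finally have eq: "(\<Sum>i<N. ?p a i * gbpa_G f N \<eta> g (a(Suc T := i)) (Suc T) j) = ?G j + ?p a j * (g (Suc T) j / ?p a j)" .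
    have "g (Suc T) j \<le> ?p a j * (g (Suc T) j / ?p a j)"
      using gS by (cases "?p a j = 0") auto
    then show "?G j + g (Suc T) j \<le> (\<Sum>i<N. ?p a i * gbpa_G f N \<eta> g (a(Suc T := i)) (Suc T) j)"
      unfolding eq by simp
  qed
  also have "\<dots> = (\<Sum>b\<in>PiE {1..Suc T} (\<lambda>_. {..<N}). gbpa_path_prob f N \<eta> g (Suc T) b * gbpa_G f N \<eta> g b (Suc T) j)"
    by (rule sum_over_step[symmetric])
  finally show ?case .
qed

end

lemma final_alg:
  fixes K n Q a :: real
  assumes K: "K > 0" and n: "n > 0" and Q: "Q > 0" and a: "0 \<le> a" "a < 1"
  shows "(K * n / Q) powr (1 / (2 - a)) * Q + n * (K / ((K * n / Q) powr (1 / (2 - a))) powr (1 - a))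
       = 2 * K powr (1 / (2 - a)) * n powr (1 / (2 - a)) * Q powr ((1 - a) / (2 - a))"
proof -
  define e where "e = 1 / (2 - a)"
  define x where "x = K * n / Q"
  have x: "x > 0" unfolding x_def using K n Q by simp
  have e1: "1 - e * (1 - a) = e" unfolding e_def using a by (simp add: field_simps)
  have e2: "1 - e = (1 - a) / (2 - a)" unfolding e_def using a by (simp add: field_simps)
  have pw: "(x powr e) powr (1 - a) = x powr (e * (1 - a))" by (simp add: powr_powr)
  have nk: "n * K = Q * x" unfolding x_def using Q by simp
  have "n * (K / (x powr e) powr (1 - a)) = (n * K) / x powr (e * (1 - a))" unfolding pw by simp
  also have "\<dots> = Q * (x / x powr (e * (1 - a)))" unfolding nk by simp
  also have "x / x powr (e * (1 - a)) = x powr (1 - e * (1 - a))"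
    using x by (simp add: powr_diff)
  also have "\<dots> = x powr e" unfolding e1 ..
  finally have t2: "n * (K / (x powr e) powr (1 - a)) = Q * x powr e" .
  have xe: "x powr e = K powr e * n powr e / Q powr e"
    unfolding x_def using K n Q by (simp add: powr_divide powr_mult)
  have qq: "Q * (1 / Q powr e) = Q powr (1 - e)"
    using Q by (simp add: powr_diff)
  have "x powr e * Q + Q * x powr e = 2 * (K powr e * n powr e) * (Q * (1 / Q powr e))"
    unfolding xe by (simp add: field_simps)
  also have "\<dots> = 2 * K powr e * n powr e * Q powr ((1 - a) / (2 - a))"
    unfolding qq e2 by simp
  finally show ?thesis unfolding e_def[symmetric] x_def[symmetric] t2 .
qed

context pert2 begin

lemma regret_main:
  assumes N: "2 \<le> N" and eta: "\<eta> > 0"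
    and gs: "\<forall>t\<in>{1..T}. \<forall>i<N. -1 \<le> g t i \<and> g t i \<le> 0"
  shows "gbpa_regret f N \<eta> g T \<le> \<eta> * (exp_max f N - (\<integral>z. z \<partial>M))
           + real T * real N * (2 * C / ((1 - \<alpha>) * \<eta> powr (1 - \<alpha>)))"
proof -
  let ?A = "PiE {1..T} (\<lambda>_. {..<N})"
  let ?W = "gbpa_path_prob f N \<eta> g T"
  let ?S = "\<lambda>a. (\<Sum>t\<in>{1..T}. g t (a t))"
  let ?Ph = "\<lambda>a. Phi f N \<eta> (gbpa_G f N \<eta> g a T)"
  let ?EZ = "\<integral>z. z \<partial>M"
  define Mx where "Mx = Max ((\<lambda>i. \<Sum>t\<in>{1..T}. g t i) ` {..<N})"
  have "0 \<in> {..<N}" using N by simp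
  then have "(\<lambda>i. \<Sum>t\<in>{1..T}. g t i) ` {..<N} \<noteq> {}" by blast
  then have "Mx \<in> (\<lambda>i. \<Sum>t\<in>{1..T}. g t i) ` {..<N}" unfolding Mx_def by (intro Max_in) auto
  then obtain j where j: "j < N" "Mx = (\<Sum>t\<in>{1..T}. g t j)" by auto
  have R: "gbpa_regret f N \<eta> g T = (\<Sum>a\<in>?A. ?W a * (?Ph a - ?S a)) + (\<Sum>a\<in>?A. ?W a * (Mx - ?Ph a))"
    unfolding gbpa_regret_def Mx_def[symmetric] sum.distrib[symmetric]
    by (intro sum.cong refl) (simp add: algebra_simps)
  have "(\<Sum>a\<in>?A. ?W a * (Mx - ?Ph a)) \<le> (\<Sum>a\<in>?A. ?W a * (Mx - gbpa_G f N \<eta> g a T j - \<eta> * ?EZ))"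
  proof (intro sum_mono mult_left_mono W_nonneg)
    fix a
    show "Mx - ?Ph a \<le> Mx - gbpa_G f N \<eta> g a T j - \<eta> * ?EZ"
      using Phi_ge[OF j(1), of "gbpa_G f N \<eta> g a T" \<eta>] by simp
  qed
  also have "\<dots> = (\<Sum>a\<in>?A. (Mx - \<eta> * ?EZ) * ?W a - ?W a * gbpa_G f N \<eta> g a T j)"
    by (intro sum.cong refl) (simp add: algebra_simps)
  also have "\<dots> = (Mx - \<eta> * ?EZ) * (\<Sum>a\<in>?A. ?W a) - (\<Sum>a\<in>?A. ?W a * gbpa_G f N \<eta> g a T j)"
    by (simp only: sum_subtractf sum_distrib_left[symmetric])
  also have "\<dots> \<le> - \<eta> * ?EZ"
    using Wsum[OF N eta] Ybound[OF N eta j(1) gs] j(2) by simp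
  finally have R2: "(\<Sum>a\<in>?A. ?W a * (Mx - ?Ph a)) \<le> - \<eta> * ?EZ" .
  have R1: "(\<Sum>a\<in>?A. ?W a * (?Ph a - ?S a)) \<le> Phi f N \<eta> (\<lambda>_. 0) + real T * real N * (2 * C / ((1 - \<alpha>) * \<eta> powr (1 - \<alpha>)))"
    by (rule Vbound[OF N eta gs])
  have P0: "Phi f N \<eta> (\<lambda>_. 0) = \<eta> * exp_max f N" using eta N by (intro Phi0) auto
  show ?thesis using R R1 R2 P0 by (simp add: algebra_simps)
qed

end

lemma bound_nonneg: "0 \<le> regret_bound C \<alpha> Q N T"
  unfolding regret_bound_def by simp

lemma regret_N1:
  "gbpa_regret f 1 \<eta> g T = 0"
proof -
  have "gbpa_regret f 1 \<eta> g T = (\<Sum>a\<in>PiE {1..T} (\<lambda>_. {..<1::nat}). gbpa_path_prob f 1 \<eta> g T a * 0)"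
    unfolding gbpa_regret_def
  proof (intro sum.cong refl)
    fix a assume a: "a \<in> PiE {1..T} (\<lambda>_. {..<1::nat})"
    have "(\<Sum>t\<in>{1..T}. g t (a t)) = (\<Sum>t\<in>{1..T}. g t 0)"
      using a by (intro sum.cong refl) (auto simp: PiE_iff)
    then show "gbpa_path_prob f 1 \<eta> g T a * (Max ((\<lambda>i. \<Sum>t\<in>{1..T}. g t i) ` {..<1}) - (\<Sum>t\<in>{1..T}. g t (a t)))
      = gbpa_path_prob f 1 \<eta> g T a * 0"
      by (simp add: lessThan_Suc)
  qed
  then show ?thesis by simp
qed

lemma regret_T0:
  assumes "1 \<le> N"
  shows "gbpa_regret f N \<eta> g 0 = 0"
proof -
  have z: "(0::nat) \<in> {..<N}" using assms by simp
  have "(\<lambda>i. 0::real) ` {..<N} = {0}" using rev_image_eqI[OF z, of 0 "\<lambda>i. 0::real"] by auto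
  then show ?thesis unfolding gbpa_regret_def by simp
qed

theorem theorem3:
  fixes f :: "real \<Rightarrow> real" and \<alpha> C Q :: real and N :: nat
  assumes f_meas: "f \<in> borel_measurable borel"
    and f_nonneg: "\<forall>z. 0 \<le> f z"
    and f_int: "integrable lborel f"
    and f_one: "(\<integral>z. f z \<partial>lborel) = 1"
    and finite_mean: "integrable lborel (\<lambda>z. z * f z)"
    and unbounded_right: "\<forall>M. cdf (pert_dist f) M < 1"
    and alpha: "0 \<le> \<alpha>" "\<alpha> < 1"
    and C_pos: "C > 0"
    and hazard: "\<forall>z. gen_hazard f \<alpha> z \<le> C"
    and N_pos: "N \<ge> 1"
    and Q_pos: "Q > 0"
    and Q_bound: "exp_max f N - (\<integral>z. z \<partial>pert_dist f) \<le> Q"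
  shows "(\<forall>T g. gain_seq N T g \<longrightarrow>
            gbpa_regret f N (eta_choice C \<alpha> Q N T) g T \<le> regret_bound C \<alpha> Q N T)
       \<and> (\<forall>\<epsilon>>0. \<exists>T0. \<forall>T\<ge>T0. \<forall>g. gain_seq N T g \<longrightarrow>
            gbpa_regret f N (eta_choice C \<alpha> Q N T) g T \<le> \<epsilon> * real T)"
proof -
  have "pert2 f \<alpha> C"
    unfolding pert2_def pert_def pert2_axioms_def using assms by auto
  then interpret P2: pert2 f \<alpha> C .
  define e where "e = 1 / (2 - \<alpha>)"
  define K where "K = 2 * C / (1 - \<alpha>)"
  have K: "K > 0" unfolding K_def using C_pos alpha by simp
  have e: "0 < e" "e < 1" unfolding e_def using alpha by (auto simp: field_simps)
  have part1: "gbpa_regret f N (eta_choice C \<alpha> Q N T) g T \<le> regret_bound C \<alpha> Q N T"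
    if gsq: "gain_seq N T g" for T g
  proof -
    have gs: "\<forall>t\<in>{1..T}. \<forall>i<N. -1 \<le> g t i \<and> g t i \<le> 0" using gsq unfolding gain_seq_def by auto
    show ?thesis
    proof (cases "N = 1 \<or> T = 0")
      case True
      then have "gbpa_regret f N (eta_choice C \<alpha> Q N T) g T = 0"
        using regret_N1 regret_T0 N_pos by auto
      then show ?thesis using bound_nonneg by simp
    next
      case False
      then have N2: "2 \<le> N" and T1: "1 \<le> T" using N_pos by auto
      define \<eta> where "\<eta> = eta_choice C \<alpha> Q N T"
      define n where "n = real N * real T"
      have n: "n > 0" unfolding n_def using N2 T1 by simp
      have eta_eq: "\<eta> = (K * n / Q) powr e"
        unfolding \<eta>_def eta_choice_def K_def n_def e_def using alpha by (simp add: field_simps)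
      have eta: "\<eta> > 0" unfolding eta_eq using K n Q_pos by simp
      have "gbpa_regret f N \<eta> g T \<le> \<eta> * (exp_max f N - (\<integral>z. z \<partial>pert_dist f))
           + real T * real N * (2 * C / ((1 - \<alpha>) * \<eta> powr (1 - \<alpha>)))"
        by (rule P2.regret_main[OF N2 eta gs])
      also have "\<dots> \<le> \<eta> * Q + real T * real N * (2 * C / ((1 - \<alpha>) * \<eta> powr (1 - \<alpha>)))"
        using Q_bound eta by (simp add: mult_left_mono)
      also have "real T * real N * (2 * C / ((1 - \<alpha>) * \<eta> powr (1 - \<alpha>))) = n * (K / \<eta> powr (1 - \<alpha>))"
      proof -
        have "0 < \<eta> powr (1 - \<alpha>)" using eta by simp
        then show ?thesis unfolding n_def K_def using alpha by (simp add: field_simps)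
      qed
      also have "\<eta> * Q + n * (K / \<eta> powr (1 - \<alpha>)) = regret_bound C \<alpha> Q N T"
        unfolding eta_eq regret_bound_def e_def K_def[symmetric] n_def[symmetric]
        using final_alg[OF K n Q_pos alpha] unfolding e_def by simp
      finally show ?thesis unfolding \<eta>_def .
    qed
  qed
  have part2: "\<exists>T0. \<forall>T\<ge>T0. \<forall>g. gain_seq N T g \<longrightarrow> gbpa_regret f N (eta_choice C \<alpha> Q N T) g T \<le> \<epsilon> * real T"
    if eps: "\<epsilon> > 0" for \<epsilon>
  proof -
    define c where "c = 2 * K powr e * real N powr e * Q powr ((1 - \<alpha>) / (2 - \<alpha>))"
    have c0: "0 \<le> c" unfolding c_def by simp
    have rb: "regret_bound C \<alpha> Q N T = c * real T powr e" for T
      unfolding regret_bound_def c_def K_def[symmetric] e_def[symmetric]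
      by (simp add: powr_mult)
    define T0 where "T0 = nat \<lceil>(c / \<epsilon>) powr (1 / (1 - e))\<rceil> + 1"
    show ?thesis
    proof (intro exI allI impI)
      fix T g assume T: "T0 \<le> T" and gsq: "gain_seq N T g"
      have T1: "1 \<le> real T" using T unfolding T0_def by simp
      have "(c / \<epsilon>) powr (1 / (1 - e)) \<le> real T"
      proof -
        have "(c / \<epsilon>) powr (1 / (1 - e)) \<le> real (nat \<lceil>(c / \<epsilon>) powr (1 / (1 - e))\<rceil>)"
          by linarith
        then show ?thesis using T unfolding T0_def by linarith
      qed
      then have "((c / \<epsilon>) powr (1 / (1 - e))) powr (1 - e) \<le> real T powr (1 - e)"
        using e by (intro powr_mono2) auto
      moreover have "((c / \<epsilon>) powr (1 / (1 - e))) powr (1 - e) = c / \<epsilon>"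
        using e c0 eps by (simp add: powr_powr)
      ultimately have ce: "c \<le> \<epsilon> * real T powr (1 - e)" using eps by (simp add: divide_le_eq mult.commute)
      have "gbpa_regret f N (eta_choice C \<alpha> Q N T) g T \<le> c * real T powr e"
        using part1[OF gsq] rb by simp
      also have "\<dots> \<le> \<epsilon> * real T powr (1 - e) * real T powr e"
        using ce by (intro mult_right_mono) auto
      also have "\<dots> = \<epsilon> * real T"
        using T1 by (simp add: mult.assoc powr_add[symmetric])
      finally show "gbpa_regret f N (eta_choice C \<alpha> Q N T) g T \<le> \<epsilon> * real T" .
    qed
  qed
  show ?thesis using part1 part2 by blast
qed

end
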